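(* Let $L^x,L^y>0$, let $i\neq j$ be two boxes, each box $k\in\{i,j\}$ having center $(c^x_k,c^y_k)$, side lengths $(\ell^x_k,\ell^y_k)$ and given constants $lb^s_k>0$. Let $$Q^{lb}=\{(c_i,c_j,\ell_i,\ell_j)\in\mathbb{R}^8:\ \tfrac12\ell^s_k\le c^s_k\le L^s-\tfrac12\ell^s_k,\ \ell^s_k\ge lb^s_k\ \ \forall s\in\{x,y\},k\in\{i,j\}\}.$$ Consider binary variables $z^s_{p,q}$ for $s\in\{x,y\}$, $(p,q)\in\{(i,j),(j,i)\}$. Let $E$ be the set of $(c_i,c_j,\ell_i,\ell_j,z)\in\mathbb{R}^8\times\{0,1\}^4$ such that $(c_i,c_j,\ell_i,\ell_j)\in Q^{lb}$, $z$ is not identically zero, $z^s_{i,j}+z^s_{j,i}\le1$ for each $s$, $z^s_{p,q}=1$ implies $\mathscr{B}_p\leftarrow_s\mathscr{B}_q$, and whenever $z^s_{i,j}=z^s_{j,i}=0$ for a direction $s$ we have both $\mathscr{B}_i\not\leftarrow_s\mathscr{B}_j$ and $\mathscr{B}_j\not\leftarrow_s\mathscr{B}_i$. Then $E$ equals the set of $(c_i,c_j,\ell_i,\ell_j,z)$ satisfying \begin{align*} &\tfrac12\ell^s_p+lb^s_q z^s_{q,p}\le c^s_p\le L^s-\tfrac12\ell^s_p-lb^s_q z^s_{p,q} &&\forall s,\ (p,q)\in\{(i,j),(j,i)\},\\ &c^s_p+\tfrac12\ell^s_p\le c^s_q-\tfrac12\ell^s_q+L^s(1-z^s_{p,q})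 &&\forall s,\ (p,q)\in\{(i,j),(j,i)\},\\ &\ell^s_p\ge lb^s_p &&\forall s,\ p\in\{i,j\},\\ &z^x_{i,j}+z^x_{j,i}+z^y_{i,j}+z^y_{j,i}\ge1,\qquad z^s_{i,j}+z^s_{j,i}\le1 &&\forall s,\\ &z^s_{p,q}\in\{0,1\} &&\forall s,\ (p,q),\\ &c^s_p+\tfrac12\ell^s_p+L^s z^s_{p,q}\ge c^s_q-\tfrac12\ell^s_q+(lb^s_p+lb^s_q)(z^s_{i,j}+z^s_{j,i}) &&\forall s,\ (p,q)\in\{(i,j),(j,i)\}, \end{align*} where $s$ ranges over $\{x,y\}$.
   Context: Box $\mathscr{B}_p$ precedes $\mathscr{B}_q$ in direction $s$, written $\mathscr{B}_p\leftarrow_s\mathscr{B}_q$, if $c^s_p+\tfrac12\ell^s_p\le c^s_q-\tfrac12\ell^s_q$; $\mathscr{B}_p$ does not precede $\mathscr{B}_q$, written $\mathscr{B}_p\not\leftarrow_s\mathscr{B}_q$, if $c^s_p+\tfrac12\ell^s_p\ge c^s_q-\tfrac12\ell^s_q$. The set $E$ is the paper's embedding $\operatorname{Em}(Q^{lb},D^8,C^8)$: the eight branches of the refined disjunction $D^8$ are $(\mathscr{B}_i\leftarrow_y\mathscr{B}_j)\wedge(\mathscr{B}_i\not\leftarrow_x\mathscr{B}_j)\wedge(\mathscr{B}_j\not\leftarrow_x\mathscr{B}_i)$; $(\mathscr{B}_i\leftarrow_y\mathscr{B}_j)\wedge(\mathscr{B}_i\leftarrow_x\mathscr{B}_j)$;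 $(\mathscr{B}_i\leftarrow_x\mathscr{B}_j)\wedge(\mathscr{B}_i\not\leftarrow_y\mathscr{B}_j)\wedge(\mathscr{B}_j\not\leftarrow_y\mathscr{B}_i)$; $(\mathscr{B}_i\leftarrow_x\mathscr{B}_j)\wedge(\mathscr{B}_j\leftarrow_y\mathscr{B}_i)$; $(\mathscr{B}_j\leftarrow_y\mathscr{B}_i)\wedge(\mathscr{B}_i\not\leftarrow_x\mathscr{B}_j)\wedge(\mathscr{B}_j\not\leftarrow_x\mathscr{B}_i)$; $(\mathscr{B}_j\leftarrow_x\mathscr{B}_i)\wedge(\mathscr{B}_j\leftarrow_y\mathscr{B}_i)$; $(\mathscr{B}_j\leftarrow_x\mathscr{B}_i)\wedge(\mathscr{B}_i\not\leftarrow_y\mathscr{B}_j)\wedge(\mathscr{B}_j\not\leftarrow_y\mathscr{B}_i)$; $(\mathscr{B}_j\leftarrow_x\mathscr{B}_i)\wedge(\mathscr{B}_i\leftarrow_y\mathscr{B}_j)$, and each branch is encoded by the vector $z$ with $z^s_{p,q}=1$ exactly when the clause $\mathscr{B}_p\leftarrow_s\mathscr{B}_q$ appears in it. *)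

theory Defs
  imports Main "HOL.Real"
begin

datatype box = BI | BJ
datatype dir = DX | DY

fun other :: "box \<Rightarrow> box" where
  "other BI = BJ" | "other BJ = BI"

text \<open>A point: centers c k s, side lengths l k s, and binary variables z s p,
  where z s p stands for z^s_{p, other p}.\<close>
type_synonym point = "(box \<Rightarrow> dir \<Rightarrow> real) \<times> (box \<Rightarrow> dir \<Rightarrow> real) \<times> (dir \<Rightarrow> box \<Rightarrow> real)"

definition precedes :: "(box \<Rightarrow> dir \<Rightarrow> real) \<Rightarrow> (box \<Rightarrow> dir \<Rightarrow> real) \<Rightarrow> dir \<Rightarrow> box \<Rightarrow> box \<Rightarrow> bool" where
  "precedes c l s p q \<longleftrightarrow> c p s + l p s / 2 \<le> c q s - l q s / 2"

definition not_precedes :: "(box \<Rightarrow> dir \<Rightarrow> real) \<Rightarrow> (box \<Rightarrow> dir \<Rightarrow> real) \<Rightarrow> dir \<Rightarrow> box \<Rightarrow> box \<Rightarrow> bool" where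
  "not_precedes c l s p q \<longleftrightarrow> c p s + l p s / 2 \<ge> c q s - l q s / 2"

definition Qlb :: "(dir \<Rightarrow> real) \<Rightarrow> (box \<Rightarrow> dir \<Rightarrow> real) \<Rightarrow> ((box \<Rightarrow> dir \<Rightarrow> real) \<times> (box \<Rightarrow> dir \<Rightarrow> real)) set" where
  "Qlb L lb = {(c, l). \<forall>s k. l k s / 2 \<le> c k s \<and> c k s \<le> L s - l k s / 2 \<and> l k s \<ge> lb k s}"

definition Eset :: "(dir \<Rightarrow> real) \<Rightarrow> (box \<Rightarrow> dir \<Rightarrow> real) \<Rightarrow> point set" where
  "Eset L lb = {(c, l, z).
      (c, l) \<in> Qlb L lb
    \<and> (\<forall>s p. z s p \<in> {0, 1})
    \<and> (\<exists>s p. z s p \<noteq> 0)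
    \<and> (\<forall>s. z s BI + z s BJ \<le> 1)
    \<and> (\<forall>s p. z s p = 1 \<longrightarrow> precedes c l s p (other p))
    \<and> (\<forall>s. z s BI = 0 \<and> z s BJ = 0 \<longrightarrow> not_precedes c l s BI BJ \<and> not_precedes c l s BJ BI)}"

definition Formulation :: "(dir \<Rightarrow> real) \<Rightarrow> (box \<Rightarrow> dir \<Rightarrow> real) \<Rightarrow> point set" where
  "Formulation L lb = {(c, l, z).
      (\<forall>s p. l p s / 2 + lb (other p) s * z s (other p) \<le> c p s
           \<and> c p s \<le> L s - l p s / 2 - lb (other p) s * z s p)
    \<and> (\<forall>s p. c p s + l p s / 2 \<le> c (other p) s - l (other p) s / 2 + L s * (1 - z s p))
    \<and> (\<forall>s p. l p s \<ge> lb p s)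
    \<and> z DX BI + z DX BJ + z DY BI + z DY BJ \<ge> 1
    \<and> (\<forall>s. z s BI + z s BJ \<le> 1)
    \<and> (\<forall>s p. z s p \<in> {0, 1})
    \<and> (\<forall>s p. c p s + l p s / 2 + L s * z s p
             \<ge> c (other p) s - l (other p) s / 2 + (lb p s + lb (other p) s) * (z s BI + z s BJ))}"

end

theory Submission
  imports Defs
begin

lemma all_dir: "(\<forall>s. P s) \<longleftrightarrow> P DX \<and> P DY" by (metis dir.exhaust)
lemma all_box: "(\<forall>s. P s) \<longleftrightarrow> P BI \<and> P BJ" by (metis box.exhaust)
lemma ex_dir: "(\<exists>s. P s) \<longleftrightarrow> P DX \<or> P DY" by (metis dir.exhaust)
lemma ex_box: "(\<exists>s. P s) \<longleftrightarrow> P BI \<or> P BJ" by (metis box.exhaust)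

lemma onedir:
  fixes L ci cj li lj a b zi zj :: real
  assumes "L > 0" "a > 0" "b > 0" "zi \<in> {0,1}" "zj \<in> {0,1}"
  shows "(li/2 \<le> ci \<and> ci \<le> L - li/2 \<and> li \<ge> a \<and> lj/2 \<le> cj \<and> cj \<le> L - lj/2 \<and> lj \<ge> b
          \<and> zi + zj \<le> 1
          \<and> (zi = 1 \<longrightarrow> ci + li/2 \<le> cj - lj/2)
          \<and> (zj = 1 \<longrightarrow> cj + lj/2 \<le> ci - li/2)
          \<and> (zi = 0 \<and> zj = 0 \<longrightarrow> ci + li/2 \<ge> cj - lj/2 \<and> cj + lj/2 \<ge> ci - li/2))
     \<longleftrightarrow>
     (li/2 + b*zj \<le> ci \<and> ci \<le> L - li/2 - b*zi \<and> lj/2 + a*zi \<le> cj \<and> cj \<le> L - lj/2 - a*zj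
      \<and> ci + li/2 \<le> cj - lj/2 + L*(1-zi) \<and> cj + lj/2 \<le> ci - li/2 + L*(1-zj)
      \<and> li \<ge> a \<and> lj \<ge> b \<and> zi + zj \<le> 1
      \<and> ci + li/2 + L*zi \<ge> cj - lj/2 + (a+b)*(zi+zj)
      \<and> cj + lj/2 + L*zj \<ge> ci - li/2 + (b+a)*(zi+zj))"
  using assms by (auto; linarith)

definition LHS :: "real \<Rightarrow> real \<Rightarrow> real \<Rightarrow> real \<Rightarrow> real \<Rightarrow> real \<Rightarrow> real \<Rightarrow> real \<Rightarrow> real \<Rightarrow> bool" where
 "LHS L a b ci cj li lj zi zj \<longleftrightarrow> (li/2 \<le> ci \<and> ci \<le> L - li/2 \<and> li \<ge> a \<and> lj/2 \<le> cj \<and> cj \<le> L - lj/2 \<and> lj \<ge> b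
          \<and> zi + zj \<le> 1
          \<and> (zi = 1 \<longrightarrow> ci + li/2 \<le> cj - lj/2)
          \<and> (zj = 1 \<longrightarrow> cj + lj/2 \<le> ci - li/2)
          \<and> (zi = 0 \<and> zj = 0 \<longrightarrow> ci + li/2 \<ge> cj - lj/2 \<and> cj + lj/2 \<ge> ci - li/2))"

definition RHS :: "real \<Rightarrow> real \<Rightarrow> real \<Rightarrow> real \<Rightarrow> real \<Rightarrow> real \<Rightarrow> real \<Rightarrow> real \<Rightarrow> real \<Rightarrow> bool" where
 "RHS L a b ci cj li lj zi zj \<longleftrightarrow>
     (li/2 + b*zj \<le> ci \<and> ci \<le> L - li/2 - b*zi \<and> lj/2 + a*zi \<le> cj \<and> cj \<le> L - lj/2 - a*zj
      \<and> ci + li/2 \<le> cj - lj/2 + L*(1-zi) \<and> cj + lj/2 \<le> ci - li/2 + L*(1-zj)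
      \<and> li \<ge> a \<and> lj \<ge> b \<and> zi + zj \<le> 1
      \<and> ci + li/2 + L*zi \<ge> cj - lj/2 + (a+b)*(zi+zj)
      \<and> cj + lj/2 + L*zj \<ge> ci - li/2 + (b+a)*(zi+zj))"

lemma LR: "L > 0 \<Longrightarrow> a > 0 \<Longrightarrow> b > 0 \<Longrightarrow> zi \<in> {0,1} \<Longrightarrow> zj \<in> {0,1} \<Longrightarrow>
   LHS L a b ci cj li lj zi zj = RHS L a b ci cj li lj zi zj"
  unfolding LHS_def RHS_def by (rule onedir)

theorem proposition5p4:
  fixes L :: "dir \<Rightarrow> real" and lb :: "box \<Rightarrow> dir \<Rightarrow> real"
  assumes "\<forall>s. L s > 0" and "\<forall>k s. lb k s > 0"
  shows "Eset L lb = Formulation L lb"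
proof (intro set_eqI)
  fix x :: point
  obtain c l z where x: "x = (c, l, z)" by (cases x) auto
  let ?Z = "\<forall>s p. z s p \<in> {0,1}"
  let ?L = "\<lambda>s. LHS (L s) (lb BI s) (lb BJ s) (c BI s) (c BJ s) (l BI s) (l BJ s) (z s BI) (z s BJ)"
  let ?R = "\<lambda>s. RHS (L s) (lb BI s) (lb BJ s) (c BI s) (c BJ s) (l BI s) (l BJ s) (z s BI) (z s BJ)"
  have E: "x \<in> Eset L lb \<longleftrightarrow> ?Z \<and> (\<exists>s p. z s p \<noteq> 0) \<and> ?L DX \<and> ?L DY"
    unfolding x Eset_def Qlb_def precedes_def not_precedes_def LHS_def
    unfolding all_dir all_box by (simp; blast)
  have F: "x \<in> Formulation L lb \<longleftrightarrow> ?Z \<and> z DX BI + z DX BJ + z DY BI + z DY BJ \<ge> 1 \<and> ?R DX \<and> ?R DY"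
    unfolding x Formulation_def RHS_def
    unfolding all_dir all_box by (simp add: algebra_simps; blast)
  show "x \<in> Eset L lb \<longleftrightarrow> x \<in> Formulation L lb"
  proof (cases ?Z)
    case True
    then have T: "z DX BI \<in> {0,1}" "z DX BJ \<in> {0,1}" "z DY BI \<in> {0,1}" "z DY BJ \<in> {0,1}"
      unfolding all_dir all_box by auto
    have ne: "(\<exists>s p. z s p \<noteq> 0) \<longleftrightarrow> z DX BI + z DX BJ + z DY BI + z DY BJ \<ge> 1"
      using T unfolding ex_dir ex_box by auto
    have "?L DX = ?R DX" by (rule LR) (use assms T in auto)
    moreover have "?L DY = ?R DY" by (rule LR) (use assms T in auto)
    ultimately show ?thesis using E F ne by blast
  next
    case False
    then show ?thesis using E F by blast
  qed
qed

end
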